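(* Let $n\ge1$ and let $Q,Q'$ be key polynomials for $\nu$ of degree $n$ with $\nu(Q)<\nu(Q')$. For $f\in K[x]$ let $f=\sum_{i=0}^rf_iQ'^i$ be the $Q'$-expansion of $f$. Then \[ \nu_Q(f)=\min_{0\le i\le r}\nu_Q(f_iQ'^i). \]
   Context: Let $K$ be a field and $\nu$ a rank one valuation on $K[x]$ (values in $\mathbb{R}\cup\{\infty\}$). For $f\in K[x]$ and $b\ge 0$, $\partial_bf$ denotes the $b$-th Hasse derivative of $f$ (defined by $f(x+y)=\sum_b\partial_bf(x)y^b$). For nonconstant $f$ set $\epsilon(f)=\max_{1\le b\le\deg f}\frac{\nu(f)-\nu(\partial_bf)}{b}$ (with $\epsilon(c)=-\infty$ for constants $c$). A monic $Q\in K[x]$ is a key polynomial for $\nu$ if for every $f\in K[x]$, $\epsilon(f)\ge\epsilon(Q)$ implies $\deg f\ge\deg Q$. For a monic $Q$ of degree $n\ge1$, every $f\in K[x]$ has a unique $Q$-expansion $f=\sum_{i=0}^ra_iQ^i$ with $\deg a_i<n$, and the truncation is $\nu_Q(f)=\min_i\nu(a_iQ^i)$. *)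

theory Defs
  imports "HOL-Computational_Algebra.Polynomial" "HOL-Library.Extended_Real"
begin

text \<open>A rank one valuation on K[x]: values in the reals together with \<infinity>
  (support allowed, i.e. nonzero polynomials may have value \<infinity>).\<close>
definition valuation :: "('a::field poly \<Rightarrow> ereal) \<Rightarrow> bool" where
  "valuation \<nu> \<longleftrightarrow>
     \<nu> 0 = \<infinity> \<and> \<nu> 1 = 0 \<and> (\<forall>f. \<nu> f \<noteq> -\<infinity>) \<and>
     (\<forall>f g. \<nu> (f * g) = \<nu> f + \<nu> g) \<and>
     (\<forall>f g. min (\<nu> f) (\<nu> g) \<le> \<nu> (f + g))"

text \<open>Hasse derivatives: f(x+y) = sum_b (hasse b f)(x) y^b. We view f(x+y) as a
  polynomial in the outer variable y with coefficients in K[x].\<close>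
definition hasse :: "nat \<Rightarrow> 'a::comm_ring_1 poly \<Rightarrow> 'a poly" where
  "hasse b f = coeff (pcompose (map_poly (\<lambda>c. [:c:]) f) [: [:0, 1:], 1 :]) b"

definition eps :: "('a::field poly \<Rightarrow> ereal) \<Rightarrow> 'a poly \<Rightarrow> ereal" where
  "eps \<nu> f = (if degree f = 0 then -\<infinity>
     else Max ((\<lambda>b. (\<nu> f - \<nu> (hasse b f)) / ereal (real b)) ` {1..degree f}))"

definition key_poly :: "('a::field poly \<Rightarrow> ereal) \<Rightarrow> 'a poly \<Rightarrow> bool" where
  "key_poly \<nu> Q \<longleftrightarrow> lead_coeff Q = 1 \<and> (\<forall>f. eps \<nu> f \<ge> eps \<nu> Q \<longrightarrow> degree f \<ge> degree Q)"

text \<open>The i-th coefficient of the Q-expansion of f (the unique a_i with deg a_i < deg Q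
  and f = sum a_i Q^i).\<close>
definition qexp_coeff :: "'a::field poly \<Rightarrow> 'a poly \<Rightarrow> nat \<Rightarrow> 'a poly" where
  "qexp_coeff Q f i = (f div Q ^ i) mod Q"

text \<open>Truncation nu_Q(f) = min_i nu(a_i Q^i); indices beyond the length of the
  expansion contribute a_i = 0, i.e. value \<infinity>.\<close>
definition trunc_val :: "('a::field poly \<Rightarrow> ereal) \<Rightarrow> 'a poly \<Rightarrow> 'a poly \<Rightarrow> ereal" where
  "trunc_val \<nu> Q f = (MIN i\<in>{..degree f}. \<nu> (qexp_coeff Q f i * Q ^ i))"

end

theory Submission
  imports Defs
begin


definition Mp :: "'a::comm_ring_1 poly \<Rightarrow> 'a poly poly" where
  "Mp f = map_poly (\<lambda>c. [:c:]) f"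

lemma const_poly_sum: "[:sum F A:] = (\<Sum>x\<in>A. [:F x:])"
proof (induct A rule: infinite_finite_induct)
  case (insert x A)
  then show ?case by (simp add: insert(3)[symmetric])
qed simp_all

lemma Mp_add: "Mp (f + g) = Mp f + Mp g"
  by (rule poly_eqI) (simp add: Mp_def coeff_map_poly)

lemma Mp_mult: "Mp (f * g) = Mp f * Mp g"
  by (rule poly_eqI) (simp add: Mp_def coeff_map_poly coeff_mult const_poly_sum mult_to_poly mult_ac)

lemma hasse_alt: "hasse b f = coeff (pcompose (Mp f) [: [:0, 1:], 1 :]) b"
  by (simp add: hasse_def Mp_def)

lemma hasse_add: "hasse b (f + g) = hasse b f + hasse b g"
  by (simp add: hasse_alt Mp_add pcompose_add)

lemma hasse_mult: "hasse b (f * g) = (\<Sum>j\<le>b. hasse j f * hasse (b - j) g)"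
  by (simp add: hasse_alt Mp_mult pcompose_mult coeff_mult)

lemma poly_Mp_X: "poly (Mp f) [:0, 1:] = f"
  by (induct f rule: pCons_induct) (simp_all add: Mp_def map_poly_pCons)

lemma hasse_0: "hasse 0 f = f"
  by (simp add: hasse_alt poly_0_coeff_0[symmetric] poly_pcompose poly_Mp_X)

lemma degree_Mp: "degree (Mp f) = degree f"
  unfolding Mp_def by (rule degree_map_poly) simp

lemma hasse_big: "b > degree f \<Longrightarrow> hasse b f = 0" for f :: "'a::field poly"
proof -
  assume b: "b > degree f"
  have "degree (pcompose (Mp f) [: [:0, 1:], 1 :]) = degree f"
    by (simp add: degree_pcompose degree_Mp)
  then show ?thesis using b by (simp add: hasse_alt coeff_eq_0)
qed

lemma hasse_top: "hasse (degree f) f = [:lead_coeff f:]" for f :: "'a::field poly"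
proof -
  have "lead_coeff (pcompose (Mp f) [: [:0, 1:], 1 :]) = lead_coeff (Mp f)"
    using lead_coeff_comp[of "[: [:0, 1:], 1 :]" "Mp f"] by simp
  then show ?thesis
    by (simp add: hasse_alt degree_pcompose degree_Mp[unfolded Mp_def] Mp_def coeff_map_poly)
qed



context
  fixes \<nu> :: "'a::field poly \<Rightarrow> ereal"
  assumes val: "valuation \<nu>"
begin

lemma v0: "\<nu> 0 = \<infinity>" and v1: "\<nu> 1 = 0" and vninf: "\<nu> f \<noteq> -\<infinity>"
  and vmult: "\<nu> (f * g) = \<nu> f + \<nu> g" and vadd: "min (\<nu> f) (\<nu> g) \<le> \<nu> (f + g)"
  using val by (auto simp: valuation_def)

lemma vneg1: "\<nu> (-1) = 0"
proof -
  have "\<nu> 1 = \<nu> (-1) + \<nu> (-1)" using vmult[of "-1" "-1"] by simp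
  then have "\<nu> (-1) + \<nu> (-1) = 0" using v1 by simp
  then show ?thesis using vninf[of "-1"] by (cases "\<nu> (-1)") auto
qed

lemma vuminus: "\<nu> (- f) = \<nu> f"
  using vmult[of "-1" f] vneg1 by simp

lemma vdiff: "min (\<nu> f) (\<nu> g) \<le> \<nu> (f - g)"
  using vadd[of f "-g"] vuminus[of g] by simp

lemma vstrict: assumes "\<nu> f < \<nu> g" shows "\<nu> (f + g) = \<nu> f"
proof -
  have 1: "\<nu> f \<le> \<nu> (f + g)" using vadd[of f g] assms by simp
  have "min (\<nu> (f + g)) (\<nu> g) \<le> \<nu> f" using vdiff[of "f + g" g] by simp
  then show ?thesis using 1 assms by (auto simp: min_def split: if_splits)
qed

lemma vsum_ge: "(\<And>x. x \<in> A \<Longrightarrow> c \<le> \<nu> (F x)) \<Longrightarrow> c \<le> \<nu> (sum F A)"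
proof (induct A rule: infinite_finite_induct)
  case (insert x A)
  then have "c \<le> min (\<nu> (F x)) (\<nu> (sum F A))" by simp
  also have "\<dots> \<le> \<nu> (sum F (insert x A))" using insert vadd by simp
  finally show ?case .
qed (simp_all add: v0)

lemma vsum_gt: "(\<And>x. x \<in> A \<Longrightarrow> c < \<nu> (F x)) \<Longrightarrow> c < \<infinity> \<Longrightarrow> c < \<nu> (sum F A)"
proof (induct A rule: infinite_finite_induct)
  case (insert x A)
  then have "c < min (\<nu> (F x)) (\<nu> (sum F A))" by simp
  also have "\<dots> \<le> \<nu> (sum F (insert x A))" using insert vadd by simp
  finally show ?case .
qed (simp_all add: v0)

lemma v_of_nat: "0 \<le> \<nu> (of_nat k)"
proof (induct k)
  case 0 then show ?case by (simp add: v0)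
next
  case (Suc k)
  have "0 \<le> min (\<nu> 1) (\<nu> (of_nat k))" using Suc v1 by simp
  also have "\<dots> \<le> \<nu> (of_nat (Suc k))" using vadd[of 1 "of_nat k"] by (simp add: add.commute)
  finally show ?case .
qed

lemma vconst: assumes "c \<noteq> 0" shows "\<nu> [:c:] \<noteq> \<infinity>"
proof
  assume a: "\<nu> [:c:] = \<infinity>"
  have "\<nu> ([:c:] * [:inverse c:]) = 0" using assms v1 by (simp add: mult_to_poly one_pCons[symmetric])
  then show False using a vmult[of "[:c:]" "[:inverse c:]"] vninf[of "[:inverse c:]"] by simp
qed

end


lemma ereal_div_le: "x \<noteq> -\<infinity> \<Longrightarrow> (0::real) < b \<Longrightarrow> (ereal a - x) / ereal b \<le> ereal e \<Longrightarrow> ereal (a - b*e) \<le> x"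
  by (cases x) (auto simp: divide_le_eq mult.commute)

lemma ereal_div_lt: "x \<noteq> -\<infinity> \<Longrightarrow> (0::real) < b \<Longrightarrow> (ereal a - x) / ereal b < ereal e \<Longrightarrow> ereal (a - b*e) < x"
  by (cases x) (auto simp: divide_less_eq mult.commute)

lemma ereal_div_eq: "(0::real) < b \<Longrightarrow> (ereal a - x) / ereal b = ereal e \<Longrightarrow> x = ereal (a - b*e)"
  by (cases x) (auto simp: divide_eq_eq mult.commute)

locale kp =
  fixes \<nu> :: "'a::field poly \<Rightarrow> ereal" and Q :: "'a poly" and n :: nat
  assumes val: "valuation \<nu>" and key: "key_poly \<nu> Q" and degQ: "degree Q = n"
    and n1: "n \<ge> 1" and finQ: "\<nu> Q \<noteq> \<infinity>"
begin

lemma monQ: "lead_coeff Q = 1" using key by (simp add: key_poly_def)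

lemma keyD: "eps \<nu> Q \<le> eps \<nu> f \<Longrightarrow> n \<le> degree f"
  using key degQ by (auto simp: key_poly_def)

lemma Q0: "Q \<noteq> 0" using degQ n1 by auto

lemma eps_ge: assumes "b \<in> {1..degree f}"
  shows "(\<nu> f - \<nu> (hasse b f)) / ereal (real b) \<le> eps \<nu> f"
proof -
  have "degree f \<noteq> 0" using assms by auto
  then show ?thesis using assms by (simp add: eps_def)
qed

lemma eps_in: assumes "degree f \<noteq> 0"
  shows "\<exists>b\<in>{1..degree f}. eps \<nu> f = (\<nu> f - \<nu> (hasse b f)) / ereal (real b)"
proof -
  have "eps \<nu> f \<in> (\<lambda>b. (\<nu> f - \<nu> (hasse b f)) / ereal (real b)) ` {1..degree f}"
    unfolding eps_def using assms by (simp del: Max_in) (rule Max_in, auto)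
  then show ?thesis by auto
qed

lemma fin_D: assumes "degree g < n" "g \<noteq> 0" shows "\<nu> g \<noteq> \<infinity>"
proof
  assume inf: "\<nu> g = \<infinity>"
  show False
  proof (cases "degree g = 0")
    case True
    then obtain c where "g = [:c:]" by (metis degree_eq_zeroE)
    then show False using vconst[OF val, of c] assms inf by auto
  next
    case False
    have "\<nu> (hasse (degree g) g) \<noteq> \<infinity>" using vconst[OF val, of "lead_coeff g"] assms
      by (simp add: hasse_top)
    then have "(\<nu> g - \<nu> (hasse (degree g) g)) / ereal (real (degree g)) = \<infinity>"
      using inf False by auto
    moreover have "(\<nu> g - \<nu> (hasse (degree g) g)) / ereal (real (degree g)) \<le> eps \<nu> g"
      using False by (intro eps_ge) auto
    ultimately have "eps \<nu> Q \<le> eps \<nu> g" by simp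
    then show False using keyD assms by fastforce
  qed
qed

definition "gam = real_of_ereal (\<nu> Q)"

lemma vQ: "\<nu> Q = ereal gam"
  using finQ vninf[OF val, of Q] by (cases "\<nu> Q") (auto simp: gam_def)

lemma eps_fin: "\<exists>e. eps \<nu> Q = ereal e"
proof -
  have dn: "degree Q \<noteq> 0" using degQ n1 by simp
  have "(\<nu> Q - \<nu> (hasse n Q)) / ereal (real n) \<le> eps \<nu> Q"
    using degQ n1 by (intro eps_ge) auto
  moreover have "\<nu> (hasse n Q) = 0" using degQ monQ v1[OF val] by (metis hasse_top one_pCons)
  ultimately have lo: "eps \<nu> Q \<noteq> -\<infinity>" using vQ n1 by auto
  obtain b where b: "b \<in> {1..degree Q}" "eps \<nu> Q = (\<nu> Q - \<nu> (hasse b Q)) / ereal (real b)"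
    using eps_in[OF dn] by blast
  have "eps \<nu> Q \<noteq> \<infinity>" using b vQ vninf[OF val, of "hasse b Q"]
    by (cases "\<nu> (hasse b Q)") auto
  with lo show ?thesis by (cases "eps \<nu> Q") auto
qed

definition "e0 = real_of_ereal (eps \<nu> Q)"

lemma epsQ: "eps \<nu> Q = ereal e0"
  using eps_fin by (auto simp: e0_def)

lemma H2: "ereal (gam - real b * e0) \<le> \<nu> (hasse b Q)"
proof -
  consider "b = 0" | "b \<in> {1..n}" | "b > n" by force
  then show ?thesis
  proof cases
    case 1 then show ?thesis by (simp add: hasse_0 vQ)
  next
    case 2
    have "(\<nu> Q - \<nu> (hasse b Q)) / ereal (real b) \<le> eps \<nu> Q"
      using 2 degQ by (intro eps_ge) auto
    then show ?thesis using 2 vninf[OF val] by (intro ereal_div_le) (auto simp: vQ epsQ)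
  next
    case 3 then show ?thesis by (simp add: hasse_big degQ v0[OF val])
  qed
qed

lemma H3: "\<exists>b\<in>{1..n}. \<nu> (hasse b Q) = ereal (gam - real b * e0)"
proof -
  have dn: "degree Q \<noteq> 0" using degQ n1 by simp
  obtain b where b: "b \<in> {1..degree Q}" "eps \<nu> Q = (\<nu> Q - \<nu> (hasse b Q)) / ereal (real b)"
    using eps_in[OF dn] by blast
  then show ?thesis using degQ by (intro bexI[of _ b] ereal_div_eq) (auto simp: vQ epsQ)
qed

lemma H1: assumes "degree g < n" "g \<noteq> 0" "b \<ge> 1"
  shows "\<nu> g - ereal (real b * e0) < \<nu> (hasse b g)"
proof -
  obtain t where t: "\<nu> g = ereal t" using fin_D[OF assms(1,2)] vninf[OF val, of g]
    by (cases "\<nu> g") auto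
  show ?thesis
  proof (cases "b \<le> degree g")
    case True
    have "\<not> eps \<nu> Q \<le> eps \<nu> g" using keyD assms by fastforce
    then have "eps \<nu> g < ereal e0" by (simp add: epsQ)
    moreover have "(\<nu> g - \<nu> (hasse b g)) / ereal (real b) \<le> eps \<nu> g"
      using True assms by (intro eps_ge) auto
    ultimately have "(\<nu> g - \<nu> (hasse b g)) / ereal (real b) < ereal e0" by simp
    then have "ereal (t - real b * e0) < \<nu> (hasse b g)"
      using assms vninf[OF val] by (intro ereal_div_lt) (auto simp: t)
    then show ?thesis by (simp add: t)
  next
    case False
    then show ?thesis by (simp add: hasse_big v0[OF val] t)
  qed
qed

end


lemma add_gt: "ereal a < x \<Longrightarrow> ereal c \<le> y \<Longrightarrow> ereal (a + c) < x + y"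
  by (cases x; cases y) auto

context kp begin

lemma H1': assumes "degree g < n" "g \<noteq> 0"
  shows "\<nu> g - ereal (real b * e0) \<le> \<nu> (hasse b g)"
proof (cases "b = 0")
  case True then show ?thesis by (simp add: hasse_0)
next
  case False then show ?thesis using H1[OF assms, of b] by simp
qed

lemma finite_val: assumes "degree g < n" "g \<noteq> 0" obtains t where "\<nu> g = ereal t"
  using fin_D[OF assms] vninf[OF val, of g] by (cases "\<nu> g") auto

lemma deg_mod: "degree (x mod Q) < n"
  using degree_mod_less[OF Q0, of x] degQ n1 by (cases "x mod Q = 0") auto

lemma deg_div: assumes "degree x < 2 * n" shows "degree (x div Q) < n"
proof (cases "x div Q = 0")
  case True then show ?thesis using n1 by simp
next
  case False
  have eq: "x = Q * (x div Q) + x mod Q" by (simp add: mult.commute)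
  have "degree (Q * (x div Q)) = n + degree (x div Q)" using False Q0 degQ by (simp add: degree_mult_eq)
  moreover have "degree (x mod Q) < degree (Q * (x div Q))" using deg_mod[of x] calculation by linarith
  ultimately have "degree x = n + degree (x div Q)" using eq by (metis degree_add_eq_left)
  then show ?thesis using assms by simp
qed

lemma hasse_zero: "hasse b (0::'a poly) = 0"
  by (cases "b = 0") (simp_all add: hasse_0 hasse_big)

lemma K: assumes a: "degree a < n" "a \<noteq> 0" and b: "degree b < n" "b \<noteq> 0"
  shows "\<nu> ((a*b) mod Q) = \<nu> a + \<nu> b"
    and "(a*b) div Q = 0 \<or> \<nu> a + \<nu> b < \<nu> ((a*b) div Q) + \<nu> Q"
proof -
  define q where "q = (a*b) div Q"
  define r where "r = (a*b) mod Q"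
  have abqr: "a * b = q * Q + r" by (simp add: q_def r_def)
  obtain A where A: "\<nu> a = ereal A" using finite_val[OF a] .
  obtain B where B: "\<nu> b = ereal B" using finite_val[OF b] .
  have vab: "\<nu> (a*b) = ereal (A + B)" using vmult[OF val] A B by simp
  have degr: "degree r < n" unfolding r_def by (rule deg_mod)
  have degq: "degree q < n" unfolding q_def
    using degree_mult_le[of a b] a b by (intro deg_div) simp
  have strict: "q = 0 \<or> \<nu> a + \<nu> b < \<nu> q + \<nu> Q"
  proof (rule ccontr)
    assume "\<not> ?thesis"
    then have q0: "q \<noteq> 0" and le: "\<nu> q + \<nu> Q \<le> \<nu> a + \<nu> b" by auto
    obtain C where C: "\<nu> q = ereal C" using finite_val[OF degq q0] .
    have CAB: "C + gam \<le> A + B" using le by (simp add: A B C vQ)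
    obtain \<beta> where \<beta>: "\<beta> \<in> {1..n}" "\<nu> (hasse \<beta> Q) = ereal (gam - real \<beta> * e0)" using H3 by blast
    have E1: "ereal (A + B - real \<beta> * e0) < \<nu> (hasse \<beta> (a*b))"
      unfolding hasse_mult
    proof (rule vsum_gt[OF val])
      fix j assume j: "j \<in> {..\<beta>}"
      show "ereal (A + B - real \<beta> * e0) < \<nu> (hasse j a * hasse (\<beta> - j) b)"
      proof (cases "j = 0")
        case True
        have "\<nu> b - ereal (real \<beta> * e0) < \<nu> (hasse \<beta> b)" using H1[OF b] \<beta> by simp
        then have "ereal (B - real \<beta> * e0) < \<nu> (hasse \<beta> b)" by (simp add: B)
        then have "ereal (B - real \<beta> * e0 + A) < \<nu> (hasse \<beta> b) + \<nu> a"
          by (rule add_gt) (simp add: A)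
        moreover have "B - real \<beta> * e0 + A = A + B - real \<beta> * e0" by simp
        ultimately have X: "ereal (A + B - real \<beta> * e0) < \<nu> (hasse \<beta> b) + \<nu> a" by simp
        have "\<nu> (hasse 0 a * hasse \<beta> b) = \<nu> (hasse \<beta> b) + \<nu> a"
          by (simp add: hasse_0 vmult[OF val] add.commute)
        then show ?thesis using True X by simp
      next
        case False
        have "\<nu> a - ereal (real j * e0) < \<nu> (hasse j a)" using H1[OF a] False by simp
        then have 1: "ereal (A - real j * e0) < \<nu> (hasse j a)" by (simp add: A)
        have "\<nu> b - ereal (real (\<beta> - j) * e0) \<le> \<nu> (hasse (\<beta> - j) b)" using H1'[OF b] by simp
        then have 2: "ereal (B - real (\<beta> - j) * e0) \<le> \<nu> (hasse (\<beta> - j) b)" by (simp add: B)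
        have "ereal (A - real j * e0 + (B - real (\<beta> - j) * e0)) < \<nu> (hasse j a) + \<nu> (hasse (\<beta> - j) b)"
          by (rule add_gt[OF 1 2])
        moreover have "A - real j * e0 + (B - real (\<beta> - j) * e0) = A + B - real \<beta> * e0"
          using j by (simp add: of_nat_diff algebra_simps)
        ultimately show ?thesis by (simp add: vmult[OF val])
      qed
    qed simp
    have E2: "ereal (C + gam - real \<beta> * e0) < \<nu> (hasse \<beta> r)"
    proof (cases "r = 0")
      case True then show ?thesis by (simp add: hasse_zero v0[OF val])
    next
      case False
      obtain R where R: "\<nu> r = ereal R" using finite_val[OF degr False] .
      have "r = a * b - q * Q" using abqr by simp
      then have "min (\<nu> (a*b)) (\<nu> (q * Q)) \<le> \<nu> r" using vdiff[OF val] by simp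
      then have CR: "C + gam \<le> R" using CAB vab by (simp add: vmult[OF val] C vQ R)
      have "\<nu> r - ereal (real \<beta> * e0) < \<nu> (hasse \<beta> r)" using H1[OF degr False] \<beta> by simp
      then have "ereal (R - real \<beta> * e0) < \<nu> (hasse \<beta> r)" by (simp add: R)
      moreover have "ereal (C + gam - real \<beta> * e0) \<le> ereal (R - real \<beta> * e0)" using CR by simp
      ultimately show ?thesis by (meson le_less_trans)
    qed
    have E3: "\<nu> (hasse \<beta> (q * Q)) = ereal (C + gam - real \<beta> * e0)"
    proof -
      have split: "hasse \<beta> (q * Q) = q * hasse \<beta> Q + (\<Sum>j\<in>{..\<beta>} - {0}. hasse j q * hasse (\<beta> - j) Q)"
        unfolding hasse_mult by (subst sum.remove[of _ 0]) (simp_all add: hasse_0)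
      have t0: "\<nu> (q * hasse \<beta> Q) = ereal (C + gam - real \<beta> * e0)"
        by (simp add: vmult[OF val] C \<beta>)
      have rest: "ereal (C + gam - real \<beta> * e0) < \<nu> (\<Sum>j\<in>{..\<beta>} - {0}. hasse j q * hasse (\<beta> - j) Q)"
      proof (rule vsum_gt[OF val])
        fix j assume j: "j \<in> {..\<beta>} - {0}"
        have "\<nu> q - ereal (real j * e0) < \<nu> (hasse j q)" using H1[OF degq q0] j by simp
        then have 1: "ereal (C - real j * e0) < \<nu> (hasse j q)" by (simp add: C)
        have 2: "ereal (gam - real (\<beta> - j) * e0) \<le> \<nu> (hasse (\<beta> - j) Q)" by (rule H2)
        have "ereal (C - real j * e0 + (gam - real (\<beta> - j) * e0)) < \<nu> (hasse j q) + \<nu> (hasse (\<beta> - j) Q)"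
          by (rule add_gt[OF 1 2])
        moreover have "C - real j * e0 + (gam - real (\<beta> - j) * e0) = C + gam - real \<beta> * e0"
          using j by (simp add: of_nat_diff algebra_simps)
        ultimately show "ereal (C + gam - real \<beta> * e0) < \<nu> (hasse j q * hasse (\<beta> - j) Q)"
          by (simp add: vmult[OF val])
      qed simp
      show ?thesis unfolding split using vstrict[OF val, of "q * hasse \<beta> Q"] t0 rest by simp
    qed
    have "hasse \<beta> (q * Q) = hasse \<beta> (a * b) - hasse \<beta> r"
      using abqr hasse_add[of \<beta> "q * Q" r] by simp
    then have "min (\<nu> (hasse \<beta> (a * b))) (\<nu> (hasse \<beta> r)) \<le> \<nu> (hasse \<beta> (q * Q))"
      using vdiff[OF val] by simp
    moreover have "ereal (C + gam - real \<beta> * e0) < min (\<nu> (hasse \<beta> (a * b))) (\<nu> (hasse \<beta> r))"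
    proof -
      have "ereal (C + gam - real \<beta> * e0) \<le> ereal (A + B - real \<beta> * e0)" using CAB by simp
      then show ?thesis using E1 E2 by (meson le_less_trans min_less_iff_conj)
    qed
    ultimately show False using E3 by (simp add: min_le_iff_disj not_le[symmetric])
  qed
  then show "(a*b) div Q = 0 \<or> \<nu> a + \<nu> b < \<nu> ((a*b) div Q) + \<nu> Q" by (simp add: q_def)
  show "\<nu> ((a*b) mod Q) = \<nu> a + \<nu> b"
  proof (cases "q = 0")
    case True then show ?thesis using abqr by (simp add: r_def vmult[OF val])
  next
    case False
    have "r = a * b + - (q * Q)" using abqr by simp
    moreover have "\<nu> (a * b) < \<nu> (- (q * Q))" using strict False by (simp add: vuminus[OF val] vmult[OF val])
    ultimately have "\<nu> r = \<nu> (a * b)" using vstrict[OF val, of "a*b" "- (q * Q)"] by (simp add: vmult[OF val])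
    then show ?thesis by (simp add: r_def vmult[OF val])
  qed
qed

end


context kp begin

abbreviation "w \<equiv> trunc_val \<nu> Q"

lemma QC0: assumes "degree s < n" shows "qexp_coeff Q (s + Q * P) 0 = s"
  using assms degQ by (simp add: qexp_coeff_def mod_poly_less)

lemma div_shift: assumes "degree s < n" shows "(s + Q * P) div Q = P"
proof -
  have "(s + P * Q) div Q = P + s div Q" using Q0 by (rule div_mult_self1)
  then show ?thesis using assms degQ by (simp add: div_poly_less mult.commute)
qed

lemma QCS: assumes "degree s < n" shows "qexp_coeff Q (s + Q * P) (Suc j) = qexp_coeff Q P j"
  using div_shift[OF assms] by (simp add: qexp_coeff_def poly_div_mult_right)

lemma QCbig: assumes "i > degree g" shows "qexp_coeff Q g i = 0"
proof -
  have "degree (Q ^ i) = n * i" using degQ by (simp add: degree_power_eq Q0)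
  moreover have "n * i \<ge> i" using n1 by simp
  ultimately have "degree g < degree (Q ^ i)" using assms by linarith
  then show ?thesis by (simp add: qexp_coeff_def div_poly_less)
qed

lemma TV_ext: assumes "N \<ge> degree g"
  shows "w g = Min ((\<lambda>i. \<nu> (qexp_coeff Q g i * Q ^ i)) ` {..N})"
proof -
  have "w g = Min ((\<lambda>i. \<nu> (qexp_coeff Q g i * Q ^ i)) ` {..degree g + k})" for k
  proof (induct k)
    case 0 then show ?case by (simp add: trunc_val_def)
  next
    case (Suc k)
    have "\<nu> (qexp_coeff Q g (Suc (degree g + k)) * Q ^ (Suc (degree g + k))) = \<infinity>"
      by (simp add: QCbig v0[OF val])
    then show ?case using Suc by (simp add: atMost_Suc min_def)
  qed
  from this[of "N - degree g"] assms show ?thesis by simp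
qed

lemma P1: assumes "degree s < n" shows "w (s + Q * P) = min (\<nu> s) (w P + \<nu> Q)"
proof -
  define g where "g = s + Q * P"
  define N where "N = degree g + degree P"
  define G where "G i = \<nu> (qexp_coeff Q P i * Q ^ i)" for i
  have "w g = Min ((\<lambda>i. \<nu> (qexp_coeff Q g i * Q ^ i)) ` {..Suc N})"
    by (rule TV_ext) (simp add: N_def)
  also have "\<dots> = min (\<nu> s) (Min ((\<lambda>i. G i + \<nu> Q) ` {..N}))"
    unfolding atMost_Suc_eq_insert_0 image_insert image_image g_def
    by (subst Min_insert) (simp_all add: QC0[OF assms] QCS[OF assms] G_def vmult[OF val] power_Suc2 mult.assoc[symmetric] add_ac)
  also have "Min ((\<lambda>i. G i + \<nu> Q) ` {..N}) = Min (G ` {..N}) + \<nu> Q"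
    using mono_Min_commute[of "\<lambda>x. x + \<nu> Q" "G ` {..N}"]
    by (simp add: image_image mono_def add_right_mono)
  also have "Min (G ` {..N}) = w P"
    unfolding G_def by (rule TV_ext[symmetric]) (simp add: N_def)
  finally show ?thesis by (simp add: g_def)
qed

end


context kp begin

lemma decomp: "x = x mod Q + Q * (x div Q)"
  by (simp add: mult.commute)

lemma w0: "w 0 = \<infinity>"
  by (simp add: trunc_val_def qexp_coeff_def v0[OF val])

lemma wD: assumes "degree s < n" shows "w s = \<nu> s"
  using P1[OF assms, of 0] by (simp add: w0 vQ)

lemma wQ: "w (Q * P) = w P + \<nu> Q"
  using P1[of 0 P] n1 by (simp add: v0[OF val])

lemma w_dec: "w x = min (\<nu> (x mod Q)) (w (x div Q) + \<nu> Q)"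
  by (subst decomp) (rule P1[OF deg_mod])

lemma Qinduct: assumes "\<And>x. (x div Q \<noteq> 0 \<Longrightarrow> P (x div Q)) \<Longrightarrow> P x" shows "P x"
proof (induct "degree x" arbitrary: x rule: less_induct)
  case less
  show ?case
  proof (rule assms)
    assume ne: "x div Q \<noteq> 0"
    then have "\<not> degree x < degree Q" using div_poly_less by blast
    then have "degree x \<noteq> 0" using degQ n1 by auto
    then have "degree (x div Q) < degree x" using degQ n1 by (intro degree_div_less) auto
    then show "P (x div Q)" by (rule less)
  qed
qed

lemma dec_lt: "x div Q \<noteq> 0 \<Longrightarrow> degree (x div Q) < degree x"
proof -
  assume ne: "x div Q \<noteq> 0"
  then have "\<not> degree x < degree Q" using div_poly_less by blast
  then have "degree x \<noteq> 0" using degQ n1 by auto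
  then show "degree (x div Q) < degree x" using degQ n1 by (intro degree_div_less) auto
qed

lemma w_add: "min (w x) (w y) \<le> w (x + y)"
proof (induct "degree x + degree y" arbitrary: x y rule: less_induct)
  case less
  define sx where "sx = x mod Q"
  define sy where "sy = y mod Q"
  define px where "px = x div Q"
  define py where "py = y div Q"
  have e: "x + y = (sx + sy) + Q * (px + py)"
    unfolding sx_def sy_def px_def py_def by (simp add: algebra_simps)
  have dsum: "degree (sx + sy) < n"
    using deg_mod[of x] deg_mod[of y] degree_add_le_max[of sx sy] unfolding sx_def sy_def by linarith
  have wx: "w x = min (\<nu> sx) (w px + \<nu> Q)" unfolding sx_def px_def by (rule w_dec)
  have wy: "w y = min (\<nu> sy) (w py + \<nu> Q)" unfolding sy_def py_def by (rule w_dec)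
  have IH: "min (w px) (w py) \<le> w (px + py)"
  proof (cases "px = 0 \<and> py = 0")
    case True then show ?thesis by (simp add: w0)
  next
    case False
    have "degree px + degree py < degree x + degree y"
      using False dec_lt[of x] dec_lt[of y] unfolding px_def py_def
      by (cases "x div Q = 0"; cases "y div Q = 0") auto
    then show ?thesis by (rule less)
  qed
  have 1: "min (w x) (w y) \<le> \<nu> (sx + sy)"
    using vadd[OF val, of sx sy] wx wy by (auto simp: min_def split: if_splits)
  have "min (w x) (w y) \<le> min (w px) (w py) + \<nu> Q"
    using wx wy by (auto simp: min_def split: if_splits)
  also have "\<dots> \<le> w (px + py) + \<nu> Q" using IH by (rule add_right_mono)
  finally have 2: "min (w x) (w y) \<le> w (px + py) + \<nu> Q" .
  show ?case unfolding e P1[OF dsum] using 1 2 by simp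
qed

lemma w_uminus: "w (- x) = w x"
proof (induct x rule: Qinduct)
  case (1 x)
  have e: "- x = (- (x mod Q)) + Q * (- (x div Q))" by (subst decomp) (simp add: algebra_simps)
  have d: "degree (- (x mod Q)) < n" using deg_mod by simp
  have "w (- (x div Q)) = w (x div Q)" using 1 by (cases "x div Q = 0") auto
  then show ?case unfolding e P1[OF d] using w_dec[of x] by (simp add: vuminus[OF val])
qed

lemma w_diff: "min (w x) (w y) \<le> w (x - y)"
  using w_add[of x "- y"] w_uminus[of y] by simp

lemma w_sum_ge: "(\<And>i. i \<in> A \<Longrightarrow> c \<le> w (F i)) \<Longrightarrow> c \<le> w (sum F A)"
proof (induct A rule: infinite_finite_induct)
  case (insert x A)
  then have "c \<le> min (w (F x)) (w (sum F A))" by simp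
  also have "\<dots> \<le> w (sum F (insert x A))" using insert w_add by simp
  finally show ?case .
qed (simp_all add: w0)

lemma w_sum_gt: "(\<And>i. i \<in> A \<Longrightarrow> c < w (F i)) \<Longrightarrow> c < \<infinity> \<Longrightarrow> c < w (sum F A)"
proof (induct A rule: infinite_finite_induct)
  case (insert x A)
  then have "c < min (w (F x)) (w (sum F A))" by simp
  also have "\<dots> \<le> w (sum F (insert x A))" using insert w_add by simp
  finally show ?case .
qed (simp_all add: w0)

lemma w_le_mod: "w x \<le> \<nu> (x mod Q)" using w_dec[of x] by simp
lemma w_le_div: "w x \<le> w (x div Q) + \<nu> Q" using w_dec[of x] by simp

lemma w_mult_D: assumes d: "degree d < n" shows "w x + \<nu> d \<le> w (x * d)"
proof (cases "d = 0")
  case True then show ?thesis by (simp add: w0)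
next
  case dnz: False
  obtain D where D: "\<nu> d = ereal D" using finite_val[OF d dnz] .
  show ?thesis
  proof (induct x rule: Qinduct)
    case (1 x)
    define s where "s = x mod Q"
    define p where "p = x div Q"
    have ds: "degree s < n" unfolding s_def by (rule deg_mod)
    have IH: "w p + \<nu> d \<le> w (p * d)" using 1 by (cases "p = 0") (auto simp: p_def w0)
    have ws: "w x \<le> \<nu> s" unfolding s_def by (rule w_le_mod)
    have wp: "w x \<le> w p + \<nu> Q" unfolding p_def by (rule w_le_div)
    define q where "q = (s * d) div Q"
    define r where "r = (s * d) mod Q"
    have dr: "degree r < n" unfolding r_def by (rule deg_mod)
    have dq: "degree q < n" unfolding q_def using degree_mult_le[of s d] ds d by (intro deg_div) simp
    have e: "x * d = r + Q * (q + p * d)"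
    proof -
      have xs: "x = s + Q * p" unfolding s_def p_def by (rule decomp)
      have sd: "s * d = r + Q * q" unfolding r_def q_def by (rule decomp)
      have "x * d = (s + Q * p) * d" using xs by simp
      also have "\<dots> = s * d + Q * (p * d)" by (simp add: algebra_simps)
      also have "\<dots> = r + Q * q + Q * (p * d)" using sd by simp
      also have "\<dots> = r + Q * (q + p * d)" by (simp add: algebra_simps)
      finally show ?thesis .
    qed
    have r_ge: "w x + \<nu> d \<le> \<nu> r"
    proof (cases "s = 0")
      case True then show ?thesis by (simp add: r_def v0[OF val])
    next
      case False
      then have "\<nu> r = \<nu> s + \<nu> d" using K(1)[OF ds False d dnz] by (simp add: r_def)
      then show ?thesis using ws by (simp add: add_right_mono)
    qed
    have q_ge: "w x + \<nu> d \<le> w q + \<nu> Q"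
    proof (cases "q = 0")
      case True then show ?thesis by (simp add: w0 vQ)
    next
      case qnz: False
      then have snz: "s \<noteq> 0" by (auto simp: q_def)
      have "\<nu> s + \<nu> d < \<nu> q + \<nu> Q" using K(2)[OF ds snz d dnz] qnz by (simp add: q_def)
      moreover have "w x + \<nu> d \<le> \<nu> s + \<nu> d" using ws by (rule add_right_mono)
      ultimately show ?thesis using wD[OF dq] by simp
    qed
    have p_ge: "w x + \<nu> d \<le> w (p * d) + \<nu> Q"
    proof -
      have "w x + \<nu> d \<le> w p + \<nu> Q + \<nu> d" using wp by (rule add_right_mono)
      also have "\<dots> = (w p + \<nu> d) + \<nu> Q" by (simp add: add_ac)
      also have "\<dots> \<le> w (p * d) + \<nu> Q" using IH by (rule add_right_mono)
      finally show ?thesis .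
    qed
    have "min (w q) (w (p * d)) + \<nu> Q \<le> w (q + p * d) + \<nu> Q"
      using w_add by (rule add_right_mono)
    moreover have "w x + \<nu> d \<le> min (w q) (w (p * d)) + \<nu> Q"
      using q_ge p_ge by (auto simp: min_def)
    ultimately have "w x + \<nu> d \<le> w (q + p * d) + \<nu> Q" by simp
    then show ?case unfolding e P1[OF dr] using r_ge by simp
  qed
qed

lemma w_nat: "w x \<le> w (of_nat k * x)"
proof -
  have "w x + \<nu> (of_nat k) \<le> w (x * of_nat k)" by (rule w_mult_D) (simp add: n1 less_le_trans[OF _ n1])
  moreover have "w x \<le> w x + \<nu> (of_nat k)" using v_of_nat[OF val, of k] by (simp add: add_increasing2)
  ultimately show ?thesis by (simp add: mult.commute)
qed

lemma w_powQ: "w (x * Q ^ j) = w x + ereal (real j * gam)"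
proof (induct j)
  case 0 then show ?case by simp
next
  case (Suc j)
  have "w (x * Q ^ Suc j) = w (Q * (x * Q ^ j))" by (simp add: algebra_simps)
  also have "\<dots> = w x + ereal (real j * gam) + ereal gam" using Suc by (simp add: wQ vQ)
  finally show ?case by (simp add: algebra_simps add.assoc)
qed

end


lemma ereal_lt_add_fin: "c < x \<Longrightarrow> c + ereal g < x + ereal g"
  by (cases c; cases x) auto

locale kph = kp +
  fixes h :: "'a poly"
  assumes degh: "degree h < n" and vh: "\<nu> h = \<nu> Q"
begin

lemma hnz: "h \<noteq> 0" using vh finQ v0[OF val] by auto

lemma deg_sum: "(\<And>i. i \<in> A \<Longrightarrow> degree (F i) < n) \<Longrightarrow> degree (sum F A) < n"
proof (induct A rule: infinite_finite_induct)
  case (insert x A)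
  then have "degree (F x) < n" by simp
  moreover have "degree (sum F A) < n" using insert by simp
  ultimately show ?case using degree_add_le_max[of "F x" "sum F A"] by (simp add: sum.insert[OF insert(1,2)])
qed (simp_all add: n1 less_le_trans[OF _ n1])

lemma w_pow_h: assumes "degree a < n" shows "\<nu> a + ereal (real k * gam) \<le> w (a * h ^ k)"
proof (induct k)
  case 0 then show ?case using wD[OF assms] by simp
next
  case (Suc k)
  have "\<nu> a + ereal (real (Suc k) * gam) = (\<nu> a + ereal (real k * gam)) + \<nu> h"
    by (simp add: vh vQ algebra_simps add.assoc)
  also have "\<dots> \<le> w (a * h ^ k) + \<nu> h" using Suc by (rule add_right_mono)
  also have "\<dots> \<le> w (a * h ^ k * h)" by (rule w_mult_D[OF degh])
  finally show ?case by (simp add: algebra_simps)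
qed

lemma carry: assumes "degree a < n" "a \<noteq> 0"
  shows "\<exists>r. degree r < n \<and> \<nu> r = \<nu> a + ereal (real k * gam) \<and> \<nu> a + ereal (real k * gam) < w (a * h ^ k - r)"
proof (induct k)
  case 0
  obtain A where "\<nu> a = ereal A" using finite_val[OF assms] .
  then show ?case using assms by (intro exI[of _ a]) (simp add: w0)
next
  case (Suc k)
  then obtain r where r: "degree r < n" "\<nu> r = \<nu> a + ereal (real k * gam)"
    "\<nu> a + ereal (real k * gam) < w (a * h ^ k - r)" by blast
  obtain A where A: "\<nu> a = ereal A" using finite_val[OF assms] .
  have rnz: "r \<noteq> 0" using r(2) A v0[OF val] by auto
  define R where "R = (r * h) mod Q"
  define q where "q = (r * h) div Q"
  have lam: "\<nu> a + ereal (real (Suc k) * gam) = \<nu> r + \<nu> h"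
    using r(2) by (simp add: vh vQ A algebra_simps)
  have vR: "\<nu> R = \<nu> r + \<nu> h" unfolding R_def using K(1)[OF r(1) rnz degh hnz] .
  have dR: "degree R < n" unfolding R_def by (rule deg_mod)
  have dq: "degree q < n" unfolding q_def using degree_mult_le[of r h] r(1) degh by (intro deg_div) simp
  have e: "a * h ^ Suc k - R = (a * h ^ k - r) * h + Q * q"
  proof -
    have "r * h = R + Q * q" unfolding R_def q_def by (rule decomp)
    then show ?thesis by (simp add: algebra_simps)
  qed
  have 1: "\<nu> r + \<nu> h < w ((a * h ^ k - r) * h)"
  proof -
    have "\<nu> r + ereal gam < w (a * h ^ k - r) + ereal gam"
      using r(2,3) by (intro ereal_lt_add_fin) simp
    also have "\<dots> \<le> w ((a * h ^ k - r) * h)" using w_mult_D[OF degh] by (simp add: vh vQ)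
    finally show ?thesis by (simp add: vh vQ)
  qed
  have 2: "\<nu> r + \<nu> h < w (Q * q)"
  proof (cases "q = 0")
    case True then show ?thesis using r(2) A by (simp add: w0 vh vQ)
  next
    case False
    then have "\<nu> r + \<nu> h < \<nu> q + \<nu> Q" using K(2)[OF r(1) rnz degh hnz] by (simp add: q_def)
    then show ?thesis by (simp add: wQ wD[OF dq])
  qed
  have "\<nu> r + \<nu> h < min (w ((a * h ^ k - r) * h)) (w (Q * q))" using 1 2 by simp
  also have "\<dots> \<le> w (a * h ^ Suc k - R)" unfolding e by (rule w_add)
  finally show ?case using lam vR dR by (intro exI[of _ R]) simp
qed

lemma A_ge: assumes "degree a < n" shows "\<nu> a + ereal (real i * gam) \<le> w (a * (Q + h) ^ i)"
proof -
  have "a * (Q + h) ^ i = (\<Sum>k\<le>i. of_nat (i choose k) * ((a * h ^ (i - k)) * Q ^ k))"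
    by (simp add: binomial_ring sum_distrib_left algebra_simps)
  also have "\<nu> a + ereal (real i * gam) \<le> w \<dots>"
  proof (rule w_sum_ge)
    fix k assume k: "k \<in> {..i}"
    have "\<nu> a + ereal (real i * gam) = (\<nu> a + ereal (real (i - k) * gam)) + ereal (real k * gam)"
      using k by (simp add: of_nat_diff algebra_simps add.assoc)
    also have "\<dots> \<le> w (a * h ^ (i - k)) + ereal (real k * gam)"
      by (rule add_right_mono[OF w_pow_h[OF assms]])
    also have "\<dots> = w (a * h ^ (i - k) * Q ^ k)" by (simp add: w_powQ)
    also have "\<dots> \<le> w (of_nat (i choose k) * ((a * h ^ (i - k)) * Q ^ k))" by (rule w_nat)
    finally show "\<nu> a + ereal (real i * gam) \<le> w (of_nat (i choose k) * ((a * h ^ (i - k)) * Q ^ k))" .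
  qed
  finally show ?thesis .
qed

lemma P6: "(\<And>k. k \<le> m \<Longrightarrow> degree (s k) < n) \<Longrightarrow> w (\<Sum>k\<le>m. s k * Q ^ k) \<le> \<nu> (s m) + ereal (real m * gam)"
proof (induct m arbitrary: s)
  case 0 then show ?case using wD[of "s 0"] by simp
next
  case (Suc m)
  have e: "(\<Sum>k\<le>Suc m. s k * Q ^ k) = s 0 + Q * (\<Sum>k\<le>m. s (Suc k) * Q ^ k)"
    by (simp add: sum.atMost_Suc_shift sum_distrib_left algebra_simps del: sum.atMost_Suc)
  have IH: "w (\<Sum>k\<le>m. s (Suc k) * Q ^ k) \<le> \<nu> (s (Suc m)) + ereal (real m * gam)"
    using Suc(1)[of "\<lambda>k. s (Suc k)"] Suc(2) by simp
  have "w (\<Sum>k\<le>Suc m. s k * Q ^ k) \<le> w (\<Sum>k\<le>m. s (Suc k) * Q ^ k) + \<nu> Q"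
    unfolding e using P1[of "s 0"] Suc(2)[of 0] by simp
  also have "\<dots> \<le> \<nu> (s (Suc m)) + ereal (real m * gam) + ereal gam"
    using IH by (simp add: vQ add_right_mono)
  finally have X: "w (\<Sum>k\<le>Suc m. s k * Q ^ k) \<le> \<nu> (s (Suc m)) + ereal (real m * gam) + ereal gam" .
  have eq: "\<nu> (s (Suc m)) + ereal (real m * gam) + ereal gam = \<nu> (s (Suc m)) + ereal (real (Suc m) * gam)"
    by (simp only: add.assoc plus_ereal.simps) (simp add: algebra_simps)
  show ?case using X unfolding eq .
qed

end


context kph begin

lemma binom_exp: "a * (Q + h) ^ i = (\<Sum>k\<le>i. of_nat (i choose k) * ((a * h ^ (i - k)) * Q ^ k))"
  by (simp add: binomial_ring sum_distrib_left algebra_simps)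

lemma mainB: assumes da: "\<And>i. i \<le> r \<Longrightarrow> degree (a i) < n" and j: "j \<le> r"
  shows "w (\<Sum>i\<le>r. a i * (Q + h) ^ i) \<le> \<nu> (a j) + ereal (real j * gam)"
proof -
  define f where "f = (\<Sum>i\<le>r. a i * (Q + h) ^ i)"
  define L where "L i = \<nu> (a i) + ereal (real i * gam)" for i
  define lam where "lam = Min (L ` {..r})"
  have lamj: "lam \<le> L j" unfolding lam_def using j by simp
  have "w f \<le> lam"
  proof (cases "lam = \<infinity>")
    case True then show ?thesis by simp
  next
    case lamfin: False
    have "lam \<in> L ` {..r}" unfolding lam_def by (rule Min_in) auto
    then obtain i0 where i0: "i0 \<le> r" "L i0 = lam" by auto
    define S where "S = {i \<in> {..r}. L i = lam}"
    have finS: "finite S" and i0S: "i0 \<in> S" using i0 by (auto simp: S_def)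
    define m where "m = Max S"
    have mS: "m \<in> S" unfolding m_def using finS i0S by (intro Max_in) auto
    have leM: "\<And>i. i \<in> S \<Longrightarrow> i \<le> m" unfolding m_def using finS by simp
    have Sr: "\<And>i. i \<in> S \<Longrightarrow> i \<le> r \<and> L i = lam" by (auto simp: S_def)
    have lamL: "\<And>i. i \<le> r \<Longrightarrow> lam \<le> L i" unfolding lam_def by simp
    have anz: "a i \<noteq> 0" if i: "i \<in> S" for i
    proof
      assume "a i = 0"
      then have "L i = \<infinity>" by (simp add: L_def v0[OF val])
      then show False using Sr[OF i] lamfin by simp
    qed
    define P where "P i k x \<longleftrightarrow> degree x < n \<and> \<nu> x = \<nu> (a i) + ereal (real (i - k) * gam) \<and>
        \<nu> (a i) + ereal (real (i - k) * gam) < w (a i * h ^ (i - k) - x)" for i k x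
    define R where "R i k = (SOME x. P i k x)" for i k
    have RP: "P i k (R i k)" if "i \<in> S" for i k
      unfolding R_def P_def by (rule someI_ex) (rule carry[OF da anz], use that Sr in auto)
    define T where "T = {..r} - S"
    have fsplit: "f = (\<Sum>i\<in>S. a i * (Q + h) ^ i) + (\<Sum>i\<in>T. a i * (Q + h) ^ i)"
      unfolding f_def T_def by (subst sum.subset_diff[of S]) (auto simp: S_def)
    have E2: "lam < w (\<Sum>i\<in>T. a i * (Q + h) ^ i)"
    proof (rule w_sum_gt)
      fix i assume i: "i \<in> T"
      then have "lam < L i" using lamL[of i] by (auto simp: T_def S_def)
      also have "L i \<le> w (a i * (Q + h) ^ i)" unfolding L_def using i by (intro A_ge da) (auto simp: T_def)
      finally show "lam < w (a i * (Q + h) ^ i)" .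
    qed (use lamfin in simp)
    define G where "G = (\<Sum>i\<in>S. \<Sum>k\<le>i. of_nat (i choose k) * (R i k * Q ^ k))"
    define E1 where "E1 = (\<Sum>i\<in>S. \<Sum>k\<le>i. of_nat (i choose k) * ((a i * h ^ (i - k) - R i k) * Q ^ k))"
    have Ssplit: "(\<Sum>i\<in>S. a i * (Q + h) ^ i) = G + E1"
      unfolding G_def E1_def binom_exp sum.distrib[symmetric]
      by (intro sum.cong refl) (simp add: algebra_simps)
    have E1: "lam < w E1" unfolding E1_def
    proof (intro w_sum_gt)
      fix i k assume i: "i \<in> S" and k: "k \<in> {..i}"
      have Pik: "P i k (R i k)" using RP[OF i] .
      have "lam = (\<nu> (a i) + ereal (real (i - k) * gam)) + ereal (real k * gam)"
        using Sr[OF i] k by (simp add: L_def of_nat_diff algebra_simps add.assoc)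
      also have "\<dots> < w (a i * h ^ (i - k) - R i k) + ereal (real k * gam)"
        using Pik unfolding P_def by (intro ereal_lt_add_fin) simp
      also have "\<dots> = w ((a i * h ^ (i - k) - R i k) * Q ^ k)" by (simp add: w_powQ)
      also have "\<dots> \<le> w (of_nat (i choose k) * ((a i * h ^ (i - k) - R i k) * Q ^ k))" by (rule w_nat)
      finally show "lam < w (of_nat (i choose k) * ((a i * h ^ (i - k) - R i k) * Q ^ k))" .
    qed (use lamfin in simp_all)
    define s where "s k = (\<Sum>i\<in>S. if k \<le> i then of_nat (i choose k) * R i k else 0)" for k
    have Geq: "G = (\<Sum>k\<le>m. s k * Q ^ k)"
    proof -
      have "(\<Sum>k\<le>m. s k * Q ^ k) = (\<Sum>k\<le>m. \<Sum>i\<in>S. if k \<le> i then of_nat (i choose k) * (R i k * Q ^ k) else 0)"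
        unfolding s_def sum_distrib_right by (intro sum.cong refl) (simp add: algebra_simps)
      also have "\<dots> = (\<Sum>i\<in>S. \<Sum>k\<le>m. if k \<le> i then of_nat (i choose k) * (R i k * Q ^ k) else 0)"
        by (rule sum.swap)
      also have "\<dots> = G" unfolding G_def
      proof (rule sum.cong[OF refl])
        fix i assume i: "i \<in> S"
        have "{k \<in> {..m}. k \<le> i} = {..i}" using leM[OF i] by auto
        then show "(\<Sum>k\<le>m. if k \<le> i then of_nat (i choose k) * (R i k * Q ^ k) else 0) =
            (\<Sum>k\<le>i. of_nat (i choose k) * (R i k * Q ^ k))"
          using sum.inter_filter[of "{..m}" "\<lambda>k. of_nat (i choose k) * (R i k * Q ^ k)" "\<lambda>k. k \<le> i"] by simp
      qed
      finally show ?thesis by simp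
    qed
    have sm: "s m = R m m"
    proof -
      have "s m = (\<Sum>i\<in>S. if i = m then of_nat (i choose m) * R i m else 0)"
        unfolding s_def using leM by (intro sum.cong refl) (auto simp: le_antisym)
      then show ?thesis using mS finS by simp
    qed
    have degs: "degree (s k) < n" for k
      unfolding s_def
    proof (rule deg_sum)
      fix i assume i: "i \<in> S"
      have "degree (of_nat (i choose k) * R i k) \<le> degree (R i k)"
        using degree_mult_le[of "of_nat (i choose k)" "R i k"] by (simp add: degree_of_nat)
      moreover have "degree (R i k) < n" using RP[OF i] by (simp add: P_def)
      ultimately show "degree (if k \<le> i then of_nat (i choose k) * R i k else 0) < n"
        using n1 by auto
    qed
    have wG: "w G \<le> lam"
    proof -
      have "w G \<le> \<nu> (s m) + ereal (real m * gam)" unfolding Geq by (rule P6) (rule degs)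
      also have "\<nu> (s m) = \<nu> (a m)" using RP[OF mS] by (simp add: sm P_def)
      finally show ?thesis using Sr[OF mS] by (simp add: L_def)
    qed
    show ?thesis
    proof (rule ccontr)
      assume "\<not> w f \<le> lam"
      then have wf: "lam < w f" by simp
      have "G = f - (E1 + (\<Sum>i\<in>T. a i * (Q + h) ^ i))" using fsplit Ssplit by simp
      then have "min (w f) (w (E1 + (\<Sum>i\<in>T. a i * (Q + h) ^ i))) \<le> w G" using w_diff by simp
      moreover have "lam < w (E1 + (\<Sum>i\<in>T. a i * (Q + h) ^ i))"
        using E1 E2 w_add[of E1 "\<Sum>i\<in>T. a i * (Q + h) ^ i"] by (meson less_le_trans min_less_iff_conj)
      ultimately show False using wf wG by (meson leD less_le_trans min_less_iff_conj)
    qed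
  qed
  then show ?thesis using lamj unfolding f_def L_def by simp
qed

end


context kph begin

lemma A_eq: assumes "degree a < n" shows "w (a * (Q + h) ^ i) = \<nu> a + ereal (real i * gam)"
proof (rule antisym)
  define b where "b j = (if j = i then a else 0)" for j
  have "(\<Sum>j\<le>i. b j * (Q + h) ^ j) = a * (Q + h) ^ i"
  proof -
    have "(\<Sum>j\<le>i. b j * (Q + h) ^ j) = (\<Sum>j\<le>i. if j = i then a * (Q + h) ^ j else 0)"
      by (intro sum.cong refl) (simp add: b_def)
    then show ?thesis by simp
  qed
  moreover have "w (\<Sum>j\<le>i. b j * (Q + h) ^ j) \<le> \<nu> (b i) + ereal (real i * gam)"
    by (rule mainB) (auto simp: b_def assms n1 less_le_trans[OF _ n1])
  ultimately show "w (a * (Q + h) ^ i) \<le> \<nu> a + ereal (real i * gam)" by (simp add: b_def)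
  show "\<nu> a + ereal (real i * gam) \<le> w (a * (Q + h) ^ i)" by (rule A_ge[OF assms])
qed

end

theorem lemma2p2:
  fixes \<nu> :: "'a::field poly \<Rightarrow> ereal"
    and Q Q' f :: "'a poly" and n r :: nat and a :: "nat \<Rightarrow> 'a poly"
  assumes "valuation \<nu>"
    and "n \<ge> 1"
    and "key_poly \<nu> Q" and "key_poly \<nu> Q'"
    and "degree Q = n" and "degree Q' = n"
    and "\<nu> Q < \<nu> Q'"
    and "f = (\<Sum>i\<le>r. a i * Q' ^ i)"
    and "\<forall>i\<le>r. degree (a i) < n"
  shows "trunc_val \<nu> Q f = (MIN i\<in>{..r}. trunc_val \<nu> Q (a i * Q' ^ i))"
proof -
  note val = assms(1)
  have finQ: "\<nu> Q \<noteq> \<infinity>" using assms(7) by auto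
  interpret kp \<nu> Q n using assms(1,2,3,5) finQ by unfold_locales auto
  define h where "h = Q' - Q"
  have QQ': "Q' = Q + h" by (simp add: h_def)
  have degh: "degree h < n"
  proof (cases "h = 0")
    case True then show ?thesis using assms(2) by simp
  next
    case False
    have le: "degree h \<le> n" unfolding h_def using degree_diff_le[of Q' n Q] assms(5,6) by simp
    have "coeff h n = 0" using assms(3,4,5,6) by (simp add: h_def key_poly_def)
    then have "degree h \<noteq> n" using False by auto
    with le show ?thesis by simp
  qed
  have vh: "\<nu> h = \<nu> Q"
  proof (rule antisym)
    show "\<nu> Q \<le> \<nu> h" using vdiff[OF val, of Q' Q] assms(7) by (simp add: h_def)
    show "\<nu> h \<le> \<nu> Q"
    proof (rule ccontr)
      assume "\<not> \<nu> h \<le> \<nu> Q"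
      then have "\<nu> Q' = \<nu> Q" unfolding QQ' using vstrict[OF val, of Q h] by simp
      then show False using assms(7) by simp
    qed
  qed
  interpret kph \<nu> Q n h by unfold_locales (use degh vh in auto)
  define L where "L i = \<nu> (a i) + ereal (real i * gam)" for i
  have Aeq: "\<And>i. i \<le> r \<Longrightarrow> trunc_val \<nu> Q (a i * Q' ^ i) = L i"
    unfolding QQ' L_def using assms(9) by (intro A_eq) auto
  have rhs: "(MIN i\<in>{..r}. trunc_val \<nu> Q (a i * Q' ^ i)) = Min (L ` {..r})"
    using Aeq by (intro arg_cong[where f = Min] image_cong) auto
  have "Min (L ` {..r}) \<in> L ` {..r}" by (rule Min_in) auto
  then obtain j where j: "j \<le> r" "L j = Min (L ` {..r})" by (metis atMost_iff imageE)
  show ?thesis unfolding rhs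
  proof (rule antisym)
    have "trunc_val \<nu> Q f \<le> L j" unfolding assms(8) QQ' L_def
      using assms(9) j by (intro mainB) auto
    then show "trunc_val \<nu> Q f \<le> Min (L ` {..r})" using j by simp
    show "Min (L ` {..r}) \<le> trunc_val \<nu> Q f" unfolding assms(8)
      by (rule w_sum_ge) (simp add: Aeq)
  qed
qed


end
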